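(* For each $n\ge0$ let $a_{n,0},\dots,a_{n,n}\in\mathbb C$ and let $P_n$ be the associated polynomial. Then $$a_{n,n}=\frac{1}{\imath^{n}n!}P_n\!\left(\frac{\imath}{2}\right).$$ Consequently, if $G(z,t)=\sum_{n\ge0}\frac{P_n(z)}{n!}t^n$ (as a formal power series in $t$), then $$\sum_{n\ge0}a_{n,n}t^n=G\!\left(\frac{\imath}{2},\frac{t}{\imath}\right).$$
   Context: $\imath=\sqrt{-1}$. $\mathcal{A}$ denotes the quotient of the free associative $\mathbb{C}$-algebra on two noncommuting generators $p,q$ by the two-sided ideal generated by $qp-pq-\imath$, and $z=\tfrac12(qp+pq)\in\mathcal A$. For $n\ge0$ and complex numbers $a_{n,0},\dots,a_{n,n}$, there is a unique polynomial $P_n\in\mathbb{C}[X]$ of degree at most $n$ with $\sum_{k=0}^n a_{n,k}q^kp^nq^{n-k}=P_n(z)$ in $\mathcal A$; it is called the polynomial associated to $\{a_{n,k}\}$. *)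

theory Defs
  imports Complex_Main "HOL-Computational_Algebra.Polynomial"
    "HOL-Computational_Algebra.Formal_Power_Series"
begin

text \<open>The free associative C-algebra on two generators p, q: finitely supported
  functions from words over the alphabet {P,Q} to C, with concatenation-convolution product.\<close>

datatype gen = Pg | Qg

type_synonym fa = "gen list \<Rightarrow> complex"

definition fa_mon :: "gen list \<Rightarrow> fa" where
  "fa_mon w = (\<lambda>v. if v = w then 1 else 0)"

definition fa_add :: "fa \<Rightarrow> fa \<Rightarrow> fa" where
  "fa_add f g = (\<lambda>w. f w + g w)"

definition fa_smult :: "complex \<Rightarrow> fa \<Rightarrow> fa" where
  "fa_smult c f = (\<lambda>w. c * f w)"

definition fa_mult :: "fa \<Rightarrow> fa \<Rightarrow> fa" where
  "fa_mult f g = (\<lambda>w. \<Sum>k\<le>length w. f (take k w) * g (drop k w))"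

definition fa_sum :: "('i \<Rightarrow> fa) \<Rightarrow> 'i set \<Rightarrow> fa" where
  "fa_sum F A = (\<lambda>w. \<Sum>i\<in>A. F i w)"

definition fa_one :: fa where
  "fa_one = fa_mon []"

fun fa_pow :: "fa \<Rightarrow> nat \<Rightarrow> fa" where
  "fa_pow x 0 = fa_one"
| "fa_pow x (Suc n) = fa_mult x (fa_pow x n)"

definition fa_p :: fa where "fa_p = fa_mon [Pg]"
definition fa_q :: fa where "fa_q = fa_mon [Qg]"

definition weyl_rel :: fa where
  "weyl_rel = fa_add (fa_mult fa_q fa_p)
      (fa_add (fa_smult (-1) (fa_mult fa_p fa_q)) (fa_smult (- \<i>) fa_one))"

inductive_set weyl_ideal :: "fa set" where
  zero: "(\<lambda>_. 0) \<in> weyl_ideal"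
| add: "x \<in> weyl_ideal \<Longrightarrow> y \<in> weyl_ideal \<Longrightarrow> fa_add x y \<in> weyl_ideal"
| smult: "x \<in> weyl_ideal \<Longrightarrow> fa_smult c x \<in> weyl_ideal"
| gen: "fa_mult (fa_mon u) (fa_mult weyl_rel (fa_mon v)) \<in> weyl_ideal"

definition weyl_eq :: "fa \<Rightarrow> fa \<Rightarrow> bool" where
  "weyl_eq f g \<longleftrightarrow> fa_add f (fa_smult (-1) g) \<in> weyl_ideal"

definition weyl_z :: fa where
  "weyl_z = fa_smult (1/2) (fa_add (fa_mult fa_q fa_p) (fa_mult fa_p fa_q))"

definition fa_poly :: "complex poly \<Rightarrow> fa \<Rightarrow> fa" where
  "fa_poly P x = fa_sum (\<lambda>i. fa_smult (coeff P i) (fa_pow x i)) {..degree P}"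

definition assoc_poly :: "(nat \<Rightarrow> complex) \<Rightarrow> nat \<Rightarrow> complex poly \<Rightarrow> bool" where
  "assoc_poly a n P \<longleftrightarrow> degree P \<le> n \<and>
     weyl_eq (fa_sum (\<lambda>k. fa_smult (a k)
                 (fa_mult (fa_pow fa_q k) (fa_mult (fa_pow fa_p n) (fa_pow fa_q (n - k))))) {..n})
             (fa_poly P weyl_z)"

definition gen_series :: "(nat \<Rightarrow> complex poly) \<Rightarrow> complex poly fps" where
  "gen_series P = Abs_fps (\<lambda>n. smult (1 / fact n) (P n))"

definition eval_coeffs :: "complex poly fps \<Rightarrow> complex \<Rightarrow> complex fps" where
  "eval_coeffs G z = Abs_fps (\<lambda>n. poly (fps_nth G n) z)"

end

theory Submission imports Defs begin

fun rho :: "gen list \<Rightarrow> complex poly \<Rightarrow> complex poly" where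
  "rho [] f = f"
| "rho (Qg # w) f = pderiv (rho w f)"
| "rho (Pg # w) f = [:0, \<i>:] * rho w f"

lemma rho_Cons: "rho (a#w) f = (case a of Qg \<Rightarrow> pderiv (rho w f) | Pg \<Rightarrow> [:0, \<i>:] * rho w f)"
  by (cases a) auto

lemma rho_append: "rho (u @ v) f = rho u (rho v f)"
  by (induction u arbitrary: f) (auto simp: rho_Cons split: gen.split)

lemma rho_add: "rho u (f + g) = rho u f + rho u g"
  by (induction u arbitrary: f g) (auto simp: rho_Cons pderiv_add algebra_simps split: gen.split)

lemma rho_smult: "rho u (smult c f) = smult c (rho u f)"
  by (induction u arbitrary: f) (auto simp: rho_Cons pderiv_smult split: gen.split)

lemma rho_zero: "rho u 0 = 0"
  by (induction u arbitrary: f) (auto simp: rho_Cons split: gen.split)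

lemma rho_diff: "rho u (f - g) = rho u f - rho u g"
  using rho_add[of u "f - g" g] by (simp add: algebra_simps)

lemma rho_sum: "finite A \<Longrightarrow> rho u (\<Sum>i\<in>A. F i) = (\<Sum>i\<in>A. rho u (F i))"
  by (induction A rule: finite_induct) (auto simp: rho_zero rho_add)

lemma smult_sum_right: "smult c (\<Sum>i\<in>A. F i) = (\<Sum>i\<in>A. smult c (F i))"
  by (induction A rule: infinite_finite_induct) (auto simp: smult_add_right)

lemma rho_comm: "rho [Qg,Pg] g - rho [Pg,Qg] g = smult \<i> g"
  by (simp add: pderiv_mult pderiv_pCons pderiv_smult algebra_simps)

definition supp :: "fa \<Rightarrow> gen list set" where "supp f = {w. f w \<noteq> 0}"

definition V :: "fa \<Rightarrow> complex poly \<Rightarrow> complex poly" where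
  "V f h = (\<Sum>w\<in>supp f. smult (f w) (rho w h))"

lemma V_eq: assumes "finite S" "supp f \<subseteq> S"
  shows "V f h = (\<Sum>w\<in>S. smult (f w) (rho w h))"
  unfolding V_def
  by (rule sum.mono_neutral_left) (use assms in \<open>auto simp: supp_def\<close>)

lemma supp_add: "supp (fa_add f g) \<subseteq> supp f \<union> supp g"
  by (auto simp: supp_def fa_add_def)
lemma supp_smult: "supp (fa_smult c f) \<subseteq> supp f"
  by (auto simp: supp_def fa_smult_def)

lemma V_add: assumes "finite (supp f)" "finite (supp g)"
  shows "V (fa_add f g) h = V f h + V g h"
proof -
  let ?S = "supp f \<union> supp g"
  have "V (fa_add f g) h = (\<Sum>w\<in>?S. smult (fa_add f g w) (rho w h))"
    using assms supp_add by (intro V_eq) auto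
  also have "\<dots> = (\<Sum>w\<in>?S. smult (f w) (rho w h)) + (\<Sum>w\<in>?S. smult (g w) (rho w h))"
    by (simp add: fa_add_def smult_add_left sum.distrib)
  also have "\<dots> = V f h + V g h"
    using assms by (simp add: V_eq[of ?S f] V_eq[of ?S g])
  finally show ?thesis .
qed

lemma V_smult: assumes "finite (supp f)"
  shows "V (fa_smult c f) h = smult c (V f h)"
proof -
  have "V (fa_smult c f) h = (\<Sum>w\<in>supp f. smult (fa_smult c f w) (rho w h))"
    using assms supp_smult by (intro V_eq) auto
  also have "\<dots> = smult c (V f h)"
    by (simp add: V_def fa_smult_def smult_sum_right)
  finally show ?thesis .
qed

lemma supp_mon: "supp (fa_mon w) = {w}"
  by (auto simp: supp_def fa_mon_def)

lemma V_mon: "V (fa_mon w) h = rho w h"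
  by (simp add: V_def supp_mon, simp add: fa_mon_def)

lemma mult_mon_left: "fa_mult (fa_mon u) X = (\<lambda>w. if take (length u) w = u then X (drop (length u) w) else 0)"
proof
  fix w
  show "fa_mult (fa_mon u) X w = (if take (length u) w = u then X (drop (length u) w) else 0)"
  proof (cases "take (length u) w = u")
    case True
    hence le: "length u \<le> length w" by (metis length_take min.absorb_iff2 nat_le_linear)
    have eq: "take k w = u \<longleftrightarrow> k = length u" if "k \<le> length w" for k
    proof
      assume "take k w = u"
      then show "k = length u" using that by auto
    next
      assume "k = length u" then show "take k w = u" using True by simp
    qed
    have "fa_mult (fa_mon u) X w = (\<Sum>k\<le>length w. if k = length u then X (drop k w) else 0)"
      unfolding fa_mult_def fa_mon_def
      by (intro sum.cong refl) (simp add: eq)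
    also have "\<dots> = X (drop (length u) w)" using le by (simp add: sum.delta)
    finally show ?thesis using True by simp
  next
    case False
    have ne: "take k w \<noteq> u" if "k \<le> length w" for k
    proof
      assume a: "take k w = u"
      then have "length u = k" using that by auto
      then show False using False a by simp
    qed
    have "fa_mult (fa_mon u) X w = (\<Sum>k\<le>length w. 0)"
      unfolding fa_mult_def fa_mon_def
      by (intro sum.cong refl) (simp add: ne)
    then show ?thesis using False by simp
  qed
qed

lemma mult_mon_mon: "fa_mult (fa_mon u) (fa_mon v) = fa_mon (u @ v)"
proof
  fix w
  have "w = u @ v \<longleftrightarrow> take (length u) w = u \<and> drop (length u) w = v"
    using append_eq_conv_conj[of u v w] by auto
  then show "fa_mult (fa_mon u) (fa_mon v) w = fa_mon (u @ v) w"
    unfolding mult_mon_left by (simp add: fa_mon_def)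
qed

lemma supp_mult_mon: "supp (fa_mult (fa_mon u) X) = (\<lambda>v. u @ v) ` supp X"
proof
  show "supp (fa_mult (fa_mon u) X) \<subseteq> (\<lambda>v. u @ v) ` supp X"
  proof
    fix w assume "w \<in> supp (fa_mult (fa_mon u) X)"
    then have a: "take (length u) w = u" "X (drop (length u) w) \<noteq> 0"
      unfolding supp_def mult_mon_left by (auto split: if_splits)
    have "w = u @ drop (length u) w" using a(1) append_take_drop_id[of "length u" w] by simp
    then show "w \<in> (\<lambda>v. u @ v) ` supp X" using a(2) unfolding supp_def by blast
  qed
next
  show "(\<lambda>v. u @ v) ` supp X \<subseteq> supp (fa_mult (fa_mon u) X)"
    unfolding supp_def mult_mon_left by auto
qed

lemma V_mult_mon: assumes "finite (supp X)"
  shows "V (fa_mult (fa_mon u) X) h = rho u (V X h)"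
proof -
  have "V (fa_mult (fa_mon u) X) h = (\<Sum>w\<in>(\<lambda>v. u @ v) ` supp X. smult (fa_mult (fa_mon u) X w) (rho w h))"
    by (simp add: V_def supp_mult_mon)
  also have "\<dots> = (\<Sum>v\<in>supp X. smult (X v) (rho (u @ v) h))"
    by (subst sum.reindex) (auto simp: inj_on_def mult_mon_left)
  also have "\<dots> = rho u (V X h)"
    by (simp add: V_def rho_sum assms rho_smult rho_append)
  finally show ?thesis .
qed


lemma mult_add_left: "fa_mult (fa_add f g) h = fa_add (fa_mult f h) (fa_mult g h)"
  by (simp add: fa_mult_def fa_add_def algebra_simps sum.distrib)
lemma mult_add_right: "fa_mult h (fa_add f g) = fa_add (fa_mult h f) (fa_mult h g)"
  by (simp add: fa_mult_def fa_add_def algebra_simps sum.distrib)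
lemma mult_smult_left: "fa_mult (fa_smult c f) h = fa_smult c (fa_mult f h)"
  by (simp add: fa_mult_def fa_smult_def sum_distrib_left algebra_simps)
lemma mult_smult_right: "fa_mult h (fa_smult c f) = fa_smult c (fa_mult h f)"
  by (simp add: fa_mult_def fa_smult_def sum_distrib_left algebra_simps)

lemma finite_supp_add: "finite (supp f) \<Longrightarrow> finite (supp g) \<Longrightarrow> finite (supp (fa_add f g))"
  using supp_add by (metis finite_Un finite_subset)
lemma finite_supp_smult: "finite (supp f) \<Longrightarrow> finite (supp (fa_smult c f))"
  using supp_smult by (metis finite_subset)

lemma gen_eq: "fa_mult (fa_mon u) (fa_mult weyl_rel (fa_mon v)) =
  fa_add (fa_mon (u@[Qg,Pg]@v)) (fa_add (fa_smult (-1) (fa_mon (u@[Pg,Qg]@v))) (fa_smult (-\<i>) (fa_mon (u@v))))"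
  by (simp add: weyl_rel_def fa_q_def fa_p_def fa_one_def mult_add_left mult_add_right
        mult_smult_left mult_smult_right mult_mon_mon)

lemma ideal_prop: "x \<in> weyl_ideal \<Longrightarrow> finite (supp x) \<and> V x h = 0"
proof (induction rule: weyl_ideal.induct)
  case zero
  have "supp (\<lambda>_. 0) = {}" by (simp add: supp_def)
  then show ?case by (simp add: V_def)
next
  case (add x y)
  then show ?case by (simp add: finite_supp_add V_add)
next
  case (smult x c)
  then show ?case by (simp add: finite_supp_smult V_smult)
next
  case (gen u v)
  have fm: "finite (supp (fa_mon w))" for w by (simp add: supp_mon)
  have "V (fa_mult (fa_mon u) (fa_mult weyl_rel (fa_mon v))) h =
     rho (u@[Qg,Pg]@v) h - rho (u@[Pg,Qg]@v) h - smult \<i> (rho (u@v) h)"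
    unfolding gen_eq
    by (simp add: V_add V_smult fm finite_supp_add finite_supp_smult V_mon)
  also have "\<dots> = rho u (rho [Qg,Pg] (rho v h) - rho [Pg,Qg] (rho v h) - smult \<i> (rho v h))"
    by (simp only: rho_append rho_diff rho_smult)
  also have "\<dots> = 0" by (simp only: rho_comm) (simp add: rho_zero)
  finally have "V (fa_mult (fa_mon u) (fa_mult weyl_rel (fa_mon v))) h = 0" .
  moreover have "finite (supp (fa_mult (fa_mon u) (fa_mult weyl_rel (fa_mon v))))"
    unfolding gen_eq by (intro finite_supp_add finite_supp_smult fm)
  ultimately show ?case by blast
qed

lemma weyl_eq_V: assumes "weyl_eq f g" "finite (supp f)" "finite (supp g)"
  shows "V f h = V g h"
proof -
  from assms(1) have "fa_add f (fa_smult (-1) g) \<in> weyl_ideal" by (simp add: weyl_eq_def)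
  from ideal_prop[OF this, of h] assms(2,3) show ?thesis
    by (simp add: V_add V_smult finite_supp_smult)
qed

lemma fa_sum_insert: "finite A \<Longrightarrow> a \<notin> A \<Longrightarrow> fa_sum F (insert a A) = fa_add (F a) (fa_sum F A)"
  by (simp add: fa_sum_def fa_add_def)

lemma fa_sum_prop: "finite A \<Longrightarrow> (\<And>i. i \<in> A \<Longrightarrow> finite (supp (F i))) \<Longrightarrow>
   finite (supp (fa_sum F A)) \<and> V (fa_sum F A) h = (\<Sum>i\<in>A. V (F i) h)"
proof (induction A rule: finite_induct)
  case empty
  have "supp (fa_sum F {}) = {}" by (simp add: supp_def fa_sum_def)
  then show ?case by (simp add: V_def)
next
  case (insert a A)
  then show ?case by (simp add: fa_sum_insert finite_supp_add V_add)
qed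

lemma pow_mon: "fa_pow (fa_mon [g]) n = fa_mon (replicate n g)"
  by (induction n) (simp_all add: fa_one_def mult_mon_mon)

lemma z_step: "smult (1/2) (rho [Qg,Pg] [:c:] + rho [Pg,Qg] [:c:]) = [:c * (\<i>/2):]"
  by (simp add: pderiv_pCons)

lemma z_pow: "finite (supp (fa_pow weyl_z j)) \<and> V (fa_pow weyl_z j) 1 = [:(\<i>/2)^j:]"
proof (induction j)
  case 0
  then show ?case by (simp add: fa_one_def supp_mon V_mon)
next
  case (Suc j)
  have e: "fa_pow weyl_z (Suc j) = fa_smult (1/2) (fa_add (fa_mult (fa_mon [Qg,Pg]) (fa_pow weyl_z j))
        (fa_mult (fa_mon [Pg,Qg]) (fa_pow weyl_z j)))"
    by (simp add: weyl_z_def mult_smult_left mult_add_left fa_q_def fa_p_def mult_mon_mon)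
  have fin: "finite (supp (fa_pow weyl_z j))" and Vj: "V (fa_pow weyl_z j) 1 = [:(\<i>/2)^j:]"
    using Suc by auto
  have f: "finite (supp (fa_mult (fa_mon u) (fa_pow weyl_z j)))" for u
    using fin by (simp add: supp_mult_mon)
  have "V (fa_pow weyl_z (Suc j)) 1 = smult (1/2) (rho [Qg,Pg] [:(\<i>/2)^j:] + rho [Pg,Qg] [:(\<i>/2)^j:])"
    unfolding e by (simp only: V_smult V_add f finite_supp_add V_mult_mon fin Vj)
  also have "\<dots> = [:(\<i>/2)^Suc j:]"
    by (simp only: z_step power_Suc mult.commute)
  finally have "V (fa_pow weyl_z (Suc j)) 1 = [:(\<i>/2)^Suc j:]" .
  moreover have "finite (supp (fa_pow weyl_z (Suc j)))"
    unfolding e by (intro finite_supp_add finite_supp_smult f)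
  ultimately show ?case by blast
qed

lemma rho_repQ: "rho (replicate m Qg) f = (pderiv ^^ m) f"
  by (induction m) auto
lemma rho_repP: "rho (replicate m Pg) f = [:0, \<i>:] ^ m * f"
  by (induction m) auto

lemma coeff_pow_lin: "coeff ([:0, c:] ^ n) n = c ^ n"
  by (induction n) (auto simp: mult_pCons_left)

lemma word_val: assumes "k \<le> n"
  shows "coeff (rho (replicate k Qg @ replicate n Pg @ replicate (n - k) Qg) 1) 0 =
    (if k = n then \<i> ^ n * fact n else 0)"
proof (cases "k = n")
  case True
  then show ?thesis
    by (simp add: rho_append rho_repQ rho_repP coeff_higher_pderiv coeff_pow_lin pochhammer_fact)
next
  case False
  then obtain m where m: "n - k = Suc m" using assms by (metis Suc_diff_Suc le_neq_implies_less)
  have "rho (replicate (n - k) Qg) 1 = 0"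
  proof -
    have "replicate (n - k) Qg = replicate m Qg @ [Qg]" by (simp add: m replicate_append_same)
    then show ?thesis by (simp add: rho_append rho_zero)
  qed
  then show ?thesis using False by (simp add: rho_append rho_zero)
qed


lemma coeff0_sum: "coeff (\<Sum>i\<in>A. F i) 0 = (\<Sum>i\<in>A. coeff (F i) 0)"
  by (induction A rule: infinite_finite_induct) auto

lemma main_part:
  assumes "assoc_poly a n Q"
  shows "a n = poly Q (\<i> / 2) / (\<i> ^ n * fact n)"
proof -
  define L where "L = fa_sum (\<lambda>k. fa_smult (a k)
                 (fa_mult (fa_pow fa_q k) (fa_mult (fa_pow fa_p n) (fa_pow fa_q (n - k))))) {..n}"
  have weq: "weyl_eq L (fa_poly Q weyl_z)" using assms by (simp add: assoc_poly_def L_def)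
  have Lk: "fa_mult (fa_pow fa_q k) (fa_mult (fa_pow fa_p n) (fa_pow fa_q (n - k)))
      = fa_mon (replicate k Qg @ replicate n Pg @ replicate (n - k) Qg)" for k
    by (simp add: fa_q_def fa_p_def pow_mon mult_mon_mon)
  have fL: "finite (supp L) \<and> V L 1 = (\<Sum>k\<le>n. smult (a k) (rho (replicate k Qg @ replicate n Pg @ replicate (n - k) Qg) 1))"
    unfolding L_def Lk
    using fa_sum_prop[of "{..n}" "\<lambda>k. fa_smult (a k) (fa_mon (replicate k Qg @ replicate n Pg @ replicate (n - k) Qg))" 1]
    by (simp add: finite_supp_smult supp_mon V_smult V_mon)
  have fR: "finite (supp (fa_poly Q weyl_z)) \<and> V (fa_poly Q weyl_z) 1 = (\<Sum>i\<le>degree Q. smult (coeff Q i) [:(\<i>/2)^i:])"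
    unfolding fa_poly_def
    using fa_sum_prop[of "{..degree Q}" "\<lambda>i. fa_smult (coeff Q i) (fa_pow weyl_z i)" 1]
    by (simp add: finite_supp_smult z_pow V_smult)
  have "V L 1 = V (fa_poly Q weyl_z) 1" using weyl_eq_V[OF weq] fL fR by blast
  hence "coeff (V L 1) 0 = coeff (V (fa_poly Q weyl_z) 1) 0" by simp
  moreover have "coeff (V L 1) 0 = a n * (\<i> ^ n * fact n)"
  proof -
    have "coeff (V L 1) 0 = (\<Sum>k\<le>n. a k * (if k = n then \<i> ^ n * fact n else 0))"
      using fL by (simp add: coeff0_sum word_val)
    also have "\<dots> = a n * (\<i> ^ n * fact n)"
      by (simp add: if_distrib sum.delta cong: if_cong)
    finally show ?thesis .
  qed
  moreover have "coeff (V (fa_poly Q weyl_z) 1) 0 = poly Q (\<i> / 2)"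
    using fR by (simp add: coeff0_sum poly_altdef)
  ultimately have "a n * (\<i> ^ n * fact n) = poly Q (\<i> / 2)" by simp
  moreover have "(\<i> ^ n * fact n :: complex) \<noteq> 0" by simp
  ultimately show ?thesis by (simp add: field_simps)
qed

theorem proposition3p3:
  fixes a :: "nat \<Rightarrow> nat \<Rightarrow> complex" and P :: "nat \<Rightarrow> complex poly"
  assumes "\<And>n. assoc_poly (a n) n (P n)"
  shows "(\<forall>n. a n n = poly (P n) (\<i> / 2) / (\<i> ^ n * fact n)) \<and>
         Abs_fps (\<lambda>n. a n n) =
           fps_compose (eval_coeffs (gen_series P) (\<i> / 2)) (fps_const (1 / \<i>) * fps_X)"
proof -
  have ii: "\<i> ^ n * (- \<i>) ^ n = 1" for n
    by (simp add: power_mult_distrib[symmetric])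
  have A: "a n n = poly (P n) (\<i> / 2) / (\<i> ^ n * fact n)" for n
    using main_part[OF assms] .
  have "fps_compose (eval_coeffs (gen_series P) (\<i> / 2)) (fps_const (1 / \<i>) * fps_X)
      = Abs_fps (\<lambda>n. (1 / \<i>) ^ n * (poly (P n) (\<i> / 2) / fact n))"
    by (simp add: fps_compose_linear eval_coeffs_def gen_series_def)
  also have "\<dots> = Abs_fps (\<lambda>n. a n n)"
    by (rule arg_cong[where f = Abs_fps], rule ext) (simp add: A power_one_over field_simps ii)
  finally show ?thesis using A by simp
qed

end
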